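(* Let $\ell\in\{-1,1\}^n$, $L=\ell\ell^T$, and $A=\lambda\ell\ell^T/\sqrt n+E$, where $E$ has i.i.d. $N(0,1)$ entries. Let $\kappa$ be a real parameter and $K$ a parameter with $\lambda,K\ge10^2$. Let $\theta=e^{-\lambda^2/2+2K\lambda+3\kappa}$. Then with probability at least $1-e^{-10\kappa}$, for all $x_1,\dots,x_n\in[0,1]$ with $x_1+\dots+x_n\le0.1n$, \[ \langle A\odot L,X\rangle\ge\big(K(x_1+\dots+x_n)-\theta n\big)\sqrt n-10^4\sqrt n\max(0,\kappa-\lambda), \] where $X$ is the $n\times n$ matrix with $X_{ij}=x_i$.
   Context: $\odot$ is the entrywise product and $\langle X,Y\rangle=\sum_{ij}X_{ij}Y_{ij}$. *)

theory Defs
  imports "HOL-Probability.Probability"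
begin

definition gauss_matrix_space :: "nat \<Rightarrow> (nat \<times> nat \<Rightarrow> real) measure" where
  "gauss_matrix_space n = PiM ({..<n} \<times> {..<n}) (\<lambda>_. std_normal_distribution)"

definition frob :: "nat \<Rightarrow> (nat \<Rightarrow> nat \<Rightarrow> real) \<Rightarrow> (nat \<Rightarrow> nat \<Rightarrow> real) \<Rightarrow> real" where
  "frob n X Y = (\<Sum>i<n. \<Sum>j<n. X i j * Y i j)"

definition hadamard :: "(nat \<Rightarrow> nat \<Rightarrow> real) \<Rightarrow> (nat \<Rightarrow> nat \<Rightarrow> real) \<Rightarrow> (nat \<Rightarrow> nat \<Rightarrow> real)" where
  "hadamard X Y = (\<lambda>i j. X i j * Y i j)"

end

theory Submission imports Defs begin

lemma gauss_mgf:
  "(\<integral>\<^sup>+x. ennreal (exp (a*x)) \<partial>std_normal_distribution) = ennreal (exp (a^2/2))"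
proof -
  have eq: "std_normal_density x * exp (a*x) = exp (a^2/2) * normal_density a 1 x" for x
  proof -
    have "-(x^2)/2 + a*x = a^2/2 + (-((x-a)^2)/2)" by (simp add: power2_eq_square field_simps)
    then show ?thesis unfolding normal_density_def
      by (simp add: exp_add[symmetric] mult.assoc)
  qed
  have "(\<integral>\<^sup>+x. ennreal (exp (a*x)) \<partial>std_normal_distribution)
      = (\<integral>\<^sup>+x. ennreal (std_normal_density x) * ennreal (exp (a*x)) \<partial>lborel)"
    by (subst nn_integral_density) auto
  also have "\<dots> = (\<integral>\<^sup>+x. ennreal (exp (a^2/2)) * ennreal (normal_density a 1 x) \<partial>lborel)"
    by (simp add: ennreal_mult[symmetric] eq)
  also have "\<dots> = ennreal (exp (a^2/2)) * (\<integral>\<^sup>+x. ennreal (normal_density a 1 x) \<partial>lborel)"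
    by (subst nn_integral_cmult) auto
  also have "(\<integral>\<^sup>+x. ennreal (normal_density a 1 x) \<partial>lborel) = 1"
    by (subst nn_integral_eq_integral) auto
  finally show ?thesis by simp
qed

definition gg :: "nat \<Rightarrow> (nat\<Rightarrow>real) \<Rightarrow> (nat\<times>nat\<Rightarrow>real) \<Rightarrow> nat \<Rightarrow> real" where
  "gg n ell E i = (\<Sum>j<n. ell i * ell j * E (i,j)) / sqrt (real n)"

lemma sum_pair: "(\<Sum>p\<in>A\<times>C. h p) = (\<Sum>i\<in>A. \<Sum>j\<in>C. h (i,j))"
  by (simp add: sum.cartesian_product)

lemma gauss_space_prob: "product_prob_space (\<lambda>_::nat\<times>nat. std_normal_distribution)"
  unfolding product_prob_space_def product_prob_space_axioms_def product_sigma_finite_def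
  using real_dist_normal_dist by (simp add: real_distribution_def prob_space_imp_sigma_finite)

lemma mgf_rows:
  assumes n: "n > 0" and hl: "\<forall>i<n. ell i \<in> {-1,1}" and B: "B \<subseteq> {..<n}"
  shows "(\<integral>\<^sup>+E. ennreal (\<Prod>i\<in>B. exp (s * (c - gg n ell E i))) \<partial>gauss_matrix_space n)
        = ennreal (exp ((s*c + s^2/2) * card B))"
proof -
  interpret P: product_prob_space "\<lambda>_::nat\<times>nat. std_normal_distribution" by (rule gauss_space_prob)
  define I where "I = {..<n}\<times>{..<n}"
  define w where "w p x = (if fst p \<in> B then -(s*ell (fst p)*ell (snd p)/sqrt n) * x else 0)" for p :: "nat\<times>nat" and x :: real
  have finB: "finite B" using B finite_subset by blast
  have pw: "(\<Prod>i\<in>B. exp (s * (c - gg n ell E i))) = exp (s*c*card B) * (\<Prod>p\<in>I. exp (w p (E p)))" for E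
  proof -
    have "(\<Sum>p\<in>I. w p (E p)) = (\<Sum>i<n. \<Sum>j<n. w (i,j) (E (i,j)))"
      unfolding I_def by (simp add: sum.cartesian_product)
    also have "\<dots> = (\<Sum>i<n. if i \<in> B then (\<Sum>j<n. -(s*ell i*ell j/sqrt n) * E (i,j)) else 0)"
      unfolding w_def by (auto intro!: sum.cong)
    also have "\<dots> = (\<Sum>i\<in>B. (\<Sum>j<n. -(s*ell i*ell j/sqrt n) * E (i,j)))"
      using B by (subst sum.inter_restrict[symmetric]) (auto simp: Int_absorb1)
    also have "\<dots> = (\<Sum>i\<in>B. - s * gg n ell E i)"
      unfolding gg_def by (auto intro!: sum.cong simp: sum_distrib_left sum_divide_distrib sum_negf)
    finally have e: "(\<Sum>p\<in>I. w p (E p)) = (\<Sum>i\<in>B. - s * gg n ell E i)" .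
    have "(\<Prod>i\<in>B. exp (s * (c - gg n ell E i))) = exp (\<Sum>i\<in>B. s*c + (- s * gg n ell E i))"
      by (simp add: exp_sum finB algebra_simps)
    also have "(\<Sum>i\<in>B. s*c + (- s * gg n ell E i)) = s*c*card B + (\<Sum>p\<in>I. w p (E p))"
      by (simp only: sum.distrib e) simp
    also have "exp (s*c*card B + (\<Sum>p\<in>I. w p (E p))) = exp (s*c*card B) * exp (\<Sum>p\<in>I. w p (E p))"
      by (rule exp_add)
    finally show ?thesis by (simp add: exp_sum I_def)
  qed
  have int1: "(\<integral>\<^sup>+x. ennreal (exp (w p x)) \<partial>std_normal_distribution) = ennreal (exp (if fst p \<in> B then s^2/(2*n) else 0))"
    if p: "p \<in> I" for p
  proof (cases "fst p \<in> B")
    case True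
    have sq: "(s*ell (fst p)*ell (snd p)/sqrt n)^2 = s^2/n"
    proof -
      have a: "(ell (fst p))^2 = 1" "(ell (snd p))^2 = 1" using hl p unfolding I_def by auto
      show ?thesis by (simp add: power_mult_distrib power_divide a)
    qed
    show ?thesis using True gauss_mgf[of "-(s*ell (fst p)*ell (snd p)/sqrt n)"]
      by (simp add: w_def sq)
  next
    case False
    then show ?thesis using P.M.emeasure_space_1 by (simp add: w_def)
  qed
  have "(\<integral>\<^sup>+E. ennreal (\<Prod>i\<in>B. exp (s * (c - gg n ell E i))) \<partial>gauss_matrix_space n)
      = (\<integral>\<^sup>+E. ennreal (exp (s*c*card B)) * (\<Prod>p\<in>I. ennreal (exp (w p (E p)))) \<partial>gauss_matrix_space n)"
    by (simp add: pw prod_ennreal[symmetric] ennreal_mult prod_nonneg)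
  also have "\<dots> = ennreal (exp (s*c*card B)) * (\<integral>\<^sup>+E. (\<Prod>p\<in>I. ennreal (exp (w p (E p)))) \<partial>gauss_matrix_space n)"
    unfolding gauss_matrix_space_def I_def
    by (rule nn_integral_cmult) (auto simp: w_def)
  also have "(\<integral>\<^sup>+E. (\<Prod>p\<in>I. ennreal (exp (w p (E p)))) \<partial>gauss_matrix_space n)
      = (\<Prod>p\<in>I. (\<integral>\<^sup>+x. ennreal (exp (w p x)) \<partial>std_normal_distribution))"
    unfolding gauss_matrix_space_def I_def
    by (rule P.product_nn_integral_prod) (auto simp: w_def)
  also have "\<dots> = (\<Prod>p\<in>I. ennreal (exp (if fst p \<in> B then s^2/(2*n) else 0)))"
    by (rule prod.cong) (auto simp: int1)
  also have "\<dots> = ennreal (exp (\<Sum>p\<in>I. (if fst p \<in> B then s^2/(2*n) else 0)))"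
    by (simp add: prod_ennreal exp_sum I_def)
  also have "(\<Sum>p\<in>I. (if fst p \<in> B then s^2/(2*n) else 0)) = (\<Sum>i<n. if i \<in> B then n * (s^2/(2*n)) else 0)"
  proof -
    have "(\<Sum>p\<in>I. (if fst p \<in> B then s^2/(2*n) else 0)) = (\<Sum>i<n. \<Sum>j<n. (if fst (i,j) \<in> B then s^2/(2*n) else 0))"
      unfolding I_def by (rule sum_pair)
    then show ?thesis by (simp add: if_distrib cong: if_cong)
  qed
  also have "\<dots> = (\<Sum>i\<in>B. n * (s^2/(2*n)))"
    using B by (subst sum.inter_restrict[symmetric]) (auto simp: Int_absorb1)
  also have "\<dots> = card B * (s^2/2)" using n by simp
  finally show ?thesis
    by (simp add: ennreal_mult[symmetric] exp_add[symmetric] algebra_simps)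
qed

lemma comp_meas: "p \<in> I \<Longrightarrow> (\<lambda>E. E p) \<in> borel_measurable (PiM I (\<lambda>_. std_normal_distribution))"
proof -
  assume p: "p \<in> I"
  have "(\<lambda>E. E p) \<in> PiM I (\<lambda>_. std_normal_distribution) \<rightarrow>\<^sub>M std_normal_distribution"
    using p by (rule measurable_component_singleton)
  moreover have "PiM I (\<lambda>_. std_normal_distribution) \<rightarrow>\<^sub>M std_normal_distribution = PiM I (\<lambda>_. std_normal_distribution) \<rightarrow>\<^sub>M borel"
    by (rule measurable_cong_sets) auto
  ultimately show ?thesis by simp
qed

lemma gg_meas: "i < n \<Longrightarrow> (\<lambda>E. gg n ell E i) \<in> borel_measurable (gauss_matrix_space n)"
  unfolding gg_def gauss_matrix_space_def
  apply (intro borel_measurable_divide borel_measurable_sum borel_measurable_times borel_measurable_const)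
  apply (rule comp_meas)
  apply auto
  done

lemma H_meas: "(\<lambda>E. \<Sum>i<n. max 0 (c - gg n ell E i)) \<in> borel_measurable (gauss_matrix_space n)"
  by (intro borel_measurable_sum borel_measurable_max borel_measurable_const borel_measurable_diff gg_meas) auto

lemma max_le_exp: "(0::real) < l \<Longrightarrow> max 0 u \<le> exp (l*u) / l"
proof -
  assume l: "0 < l"
  have "l*u \<le> exp (l*u)" using exp_ge_add_one_self[of "l*u"] by linarith
  then have "u \<le> exp (l*u) / l" using l by (simp add: field_simps)
  then show ?thesis using l by (simp add: max_def)
qed

lemma exp_max_le: "exp (l * max 0 u) \<le> exp (l*u) + (1::real)"
  by (cases "u \<le> 0") (auto simp: max_def)

lemma tail:
  assumes n: "n > 0" and hl: "\<forall>i<n. ell i \<in> {-1,1}"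
    and hlam: "lam \<ge> 100" and hK: "K \<ge> 100" and hk: "\<kappa> > 0"
  defines "\<theta> \<equiv> exp (- (lam^2) / 2 + 2 * K * lam + 3 * \<kappa>)"
  defines "T \<equiv> \<theta> * real n + 10^4 * max 0 (\<kappa> - lam)"
  defines "H \<equiv> (\<lambda>E. \<Sum>i<n. max 0 ((K - lam) - gg n ell E i))"
  shows "emeasure (gauss_matrix_space n) {E \<in> space (gauss_matrix_space n). T < H E} \<le> ennreal (exp (-10*\<kappa>))"
proof -
  define M where "M = gauss_matrix_space n"
  define c where "c = K - lam"
  define q where "q = lam*c + lam^2/2"
  define A where "A = {E \<in> space M. T < H E}"
  have Hm: "H \<in> borel_measurable M" unfolding H_def M_def by (rule H_meas)
  have Aset: "A \<in> sets M" unfolding A_def using Hm by measurable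
  have thpos: "\<theta> > 0" unfolding \<theta>_def by simp
  have Tge: "T \<ge> \<theta> * real n" unfolding T_def by simp
  have Tpos: "T > 0" using Tge thpos n by (smt (verit) of_nat_0_less_iff mult_pos_pos)
  have lpos: "lam > 0" using hlam by simp
  have mgf1: "(\<integral>\<^sup>+E. ennreal (exp (lam * (c - gg n ell E i))) \<partial>M) = ennreal (exp q)" if "i < n" for i
    using mgf_rows[OF n hl, of "{i}" lam c] that unfolding M_def q_def by simp
  have qth: "q = (- (lam^2) / 2 + 2 * K * lam + 3 * \<kappa>) - (K*lam + 3*\<kappa>)"
    unfolding q_def c_def by (simp add: power2_eq_square algebra_simps)
  have KL: "K*lam \<ge> 100*lam" using hK lpos by (simp add: mult_right_mono)
  have eq_le: "exp q \<le> \<theta>" unfolding qth \<theta>_def using KL hk lpos by simp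
  have "emeasure M A = (\<integral>\<^sup>+E. indicator A E \<partial>M)" using Aset by simp
  show ?thesis
  proof (cases "\<kappa> < 2*lam")
    case True
    have "(\<integral>\<^sup>+E. indicator A E \<partial>M) \<le> (\<integral>\<^sup>+E. (\<Sum>i<n. ennreal (1/(lam*T)) * ennreal (exp (lam * (c - gg n ell E i)))) \<partial>M)"
    proof (rule nn_integral_mono)
      fix E assume E: "E \<in> space M"
      have "H E \<le> (\<Sum>i<n. exp (lam * (c - gg n ell E i)) / lam)"
        unfolding H_def c_def by (rule sum_mono) (rule max_le_exp[OF lpos])
      then have "H E / T \<le> (\<Sum>i<n. (1/(lam*T)) * exp (lam * (c - gg n ell E i)))"
        using Tpos by (simp add: divide_right_mono sum_divide_distrib[symmetric] field_simps)
      moreover have "indicator A E \<le> ennreal (H E / T)"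
        using E Tpos by (auto simp: A_def indicator_def)
      ultimately have "indicator A E \<le> ennreal (\<Sum>i<n. (1/(lam*T)) * exp (lam * (c - gg n ell E i)))"
        by (meson ennreal_leI order_trans)
      also have "\<dots> = (\<Sum>i<n. ennreal (1/(lam*T)) * ennreal (exp (lam * (c - gg n ell E i))))"
        using lpos Tpos by (simp add: ennreal_mult[symmetric] sum_ennreal)
      finally show "indicator A E \<le> (\<Sum>i<n. ennreal (1/(lam*T)) * ennreal (exp (lam * (c - gg n ell E i))))" .
    qed
    also have "\<dots> = (\<Sum>i<n. ennreal (1/(lam*T)) * ennreal (exp q))"
      apply (subst nn_integral_sum)
      subgoal for i unfolding M_def using gg_meas[of i n ell] by measurable
      apply (rule sum.cong, simp)
      apply (subst nn_integral_cmult)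
      subgoal for i unfolding M_def using gg_meas[of i n ell] by measurable
      using mgf1 by simp
    also have "\<dots> = ennreal (real n * (exp q / (lam*T)))"
      using lpos Tpos by (simp add: ennreal_mult[symmetric] ennreal_of_nat_eq_real_of_nat)
    also have "\<dots> \<le> ennreal (exp (-10*\<kappa>))"
    proof (rule ennreal_leI)
      have "real n * (exp q / (lam*T)) \<le> real n * (exp q / (lam * (\<theta> * real n)))"
        using Tge thpos n lpos Tpos by (intro mult_left_mono divide_left_mono mult_left_mono) auto
      also have "\<dots> = exp q / \<theta> / lam" using n by (simp add: field_simps)
      also have "\<dots> \<le> exp q / \<theta>" using hlam thpos by (simp add: divide_le_eq)
      also have "exp q / \<theta> = exp (q - (- (lam^2) / 2 + 2 * K * lam + 3 * \<kappa>))"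
        unfolding \<theta>_def by (rule exp_diff[symmetric])
      also have "\<dots> = exp (- (K*lam + 3*\<kappa>))" by (simp add: qth)
      also have "\<dots> \<le> exp (-10*\<kappa>)"
      proof -
        have "7*\<kappa> \<le> K*lam" using KL True hlam by linarith
        then show ?thesis by simp
      qed
      finally show "real n * (exp q / (lam*T)) \<le> exp (-10*\<kappa>)" .
    qed
    finally show ?thesis using \<open>emeasure M A = _\<close> unfolding A_def M_def by simp
  next
    case False
    define P where "P = Pow {..<n::nat}"
    have finP: "finite P" unfolding P_def by simp
    have "(\<integral>\<^sup>+E. indicator A E \<partial>M) \<le> (\<integral>\<^sup>+E. ennreal (exp (-lam*T)) * (\<Sum>X\<in>P. ennreal (\<Prod>i\<in>X. exp (lam * (c - gg n ell E i)))) \<partial>M)"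
    proof (rule nn_integral_mono)
      fix E assume E: "E \<in> space M"
      have "indicator A E \<le> ennreal (exp (lam * (H E - T)))"
        using E lpos by (auto simp: A_def indicator_def)
      also have "exp (lam * (H E - T)) = exp (-lam*T) * (\<Prod>i<n. exp (lam * max 0 (c - gg n ell E i)))"
        unfolding H_def c_def by (simp add: exp_sum[symmetric] exp_add[symmetric] sum_distrib_left algebra_simps)
      also have "\<dots> \<le> exp (-lam*T) * (\<Prod>i<n. exp (lam * (c - gg n ell E i)) + 1)"
        by (intro mult_left_mono prod_mono) (auto simp: exp_max_le)
      also have "(\<Prod>i<n. exp (lam * (c - gg n ell E i)) + 1) = (\<Sum>X\<in>P. (\<Prod>i\<in>X. exp (lam * (c - gg n ell E i))))"
        unfolding P_def by (subst prod_add) auto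
      finally have "indicator A E \<le> ennreal (exp (-lam*T) * (\<Sum>X\<in>P. (\<Prod>i\<in>X. exp (lam * (c - gg n ell E i)))))"
        by (simp add: ennreal_leI)
      also have "\<dots> = ennreal (exp (-lam*T)) * (\<Sum>X\<in>P. ennreal (\<Prod>i\<in>X. exp (lam * (c - gg n ell E i))))"
        by (simp add: ennreal_mult sum_ennreal prod_nonneg sum_nonneg)
      finally show "indicator A E \<le> ennreal (exp (-lam*T)) * (\<Sum>X\<in>P. ennreal (\<Prod>i\<in>X. exp (lam * (c - gg n ell E i))))" .
    qed
    also have "\<dots> = ennreal (exp (-lam*T)) * (\<Sum>X\<in>P. ennreal (exp (q * card X)))"
    proof -
      have m: "(\<lambda>E. ennreal (\<Prod>i\<in>X. exp (lam * (c - gg n ell E i)))) \<in> borel_measurable M" if "X \<in> P" for X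
      proof -
        have "(\<lambda>E. (\<Prod>i\<in>X. exp (lam * (c - gg n ell E i)))) \<in> borel_measurable M"
          unfolding M_def
        proof (rule borel_measurable_prod)
          fix i assume "i \<in> X"
          then have "i < n" using that unfolding P_def by auto
          then have [measurable]: "(\<lambda>E. gg n ell E i) \<in> borel_measurable (gauss_matrix_space n)" by (rule gg_meas)
          show "(\<lambda>E. exp (lam * (c - gg n ell E i))) \<in> borel_measurable (gauss_matrix_space n)" by measurable
        qed
        then show ?thesis by simp
      qed
      show ?thesis
        apply (subst nn_integral_cmult)
        subgoal using m by (intro borel_measurable_sum) auto
        apply (subst nn_integral_sum)
        subgoal using m by auto
        apply (rule arg_cong[where f="\<lambda>x. _ * x"])
        apply (rule sum.cong, simp)
        subgoal for X using mgf_rows[OF n hl, of X lam c] unfolding P_def M_def q_def by (simp add: mult.commute)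
        done
    qed
    also have "\<dots> = ennreal (exp (-lam*T) * (exp q + 1)^n)"
    proof -
      have "(exp q + 1)^n = (\<Prod>i<n. exp q + 1)" by simp
      also have "\<dots> = (\<Sum>X\<in>P. exp q ^ card X)" unfolding P_def by (subst prod_add) auto
      also have "\<dots> = (\<Sum>X\<in>P. exp (q * card X))" by (rule sum.cong) (simp_all add: exp_of_nat_mult[symmetric] mult.commute)
      finally show ?thesis by (simp add: ennreal_mult sum_ennreal sum_nonneg)
    qed
    also have "\<dots> \<le> ennreal (exp (-10*\<kappa>))"
    proof (rule ennreal_leI)
      have "(exp q + 1)^n \<le> exp (exp q)^n"
        by (intro power_mono) (auto simp: exp_ge_add_one_self add.commute)
      also have "\<dots> = exp (real n * exp q)" by (simp add: exp_of_nat_mult)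
      finally have "exp (-lam*T) * (exp q + 1)^n \<le> exp (-lam*T) * exp (real n * exp q)" by simp
      also have "\<dots> = exp (-lam*T + real n * exp q)" by (simp add: exp_add[symmetric])
      also have "\<dots> \<le> exp (-10*\<kappa>)"
      proof -
        have pen: "max 0 (\<kappa> - lam) = \<kappa> - lam" using False lpos by simp
        have a: "real n * exp q \<le> lam * (\<theta> * real n)"
        proof -
          have "real n * exp q \<le> real n * \<theta>" using eq_le by (simp add: mult_left_mono)
          also have "\<dots> \<le> lam * (\<theta> * real n)" using hlam thpos
            by (simp add: mult_right_mono[of 1 lam "\<theta> * real n", simplified] mult.commute)
          finally show ?thesis .
        qed
        have b: "lam * (10^4 * (\<kappa> - lam)) \<ge> 100 * (10^4 * (\<kappa> - lam))"
          using hlam False by (intro mult_right_mono) auto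
        have "-lam*T + real n * exp q \<le> - (100 * (10^4 * (\<kappa> - lam)))"
          using a b unfolding T_def pen by (simp add: algebra_simps)
        also have "\<dots> \<le> -10*\<kappa>" using False hk by simp
        finally show ?thesis by simp
      qed
      finally show "exp (-lam*T) * (exp q + 1)^n \<le> exp (-10*\<kappa>)" .
    qed
    finally show ?thesis using \<open>emeasure M A = _\<close> unfolding A_def M_def by simp
  qed
qed

lemma frob_eq:
  assumes n: "n > 0" and hl: "\<forall>i<n. ell i \<in> {-1,1}"
  shows "frob n (hadamard (\<lambda>i j. lam * (ell i * ell j) / sqrt (real n) + E (i, j)) (\<lambda>i j. ell i * ell j)) (\<lambda>i j. x i)
     = sqrt n * (\<Sum>i<n. x i * (lam + gg n ell E i))"
proof -
  have sn: "sqrt (real n) > 0" using n by simp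
  have row: "(\<Sum>j<n. (lam * (ell i * ell j) / sqrt (real n) + E (i, j)) * (ell i * ell j) * x i)
       = sqrt n * (x i * (lam + gg n ell E i))" if i: "i < n" for i
  proof -
    have "(\<Sum>j<n. (lam * (ell i * ell j) / sqrt (real n) + E (i, j)) * (ell i * ell j) * x i)
        = (\<Sum>j<n. x i * (lam / sqrt n) + x i * (ell i * ell j * E (i,j)))"
    proof (rule sum.cong)
      fix j assume "j \<in> {..<n}"
      then have "ell i \<in> {-1,1}" "ell j \<in> {-1,1}" using hl i by auto
      then have "(ell i * ell j) * (ell i * ell j) = 1" by auto
      then show "(lam * (ell i * ell j) / sqrt (real n) + E (i, j)) * (ell i * ell j) * x i
          = x i * (lam / sqrt n) + x i * (ell i * ell j * E (i,j))"
        by (simp add: algebra_simps)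
    qed simp
    also have "\<dots> = x i * (n * (lam / sqrt n)) + x i * (\<Sum>j<n. ell i * ell j * E (i,j))"
      by (simp add: sum.distrib sum_distrib_left)
    also have "n * (lam / sqrt n) = sqrt n * lam"
      using sn by (simp add: field_simps)
    also have "(\<Sum>j<n. ell i * ell j * E (i,j)) = sqrt n * gg n ell E i"
      unfolding gg_def using sn by simp
    finally show ?thesis by (simp add: algebra_simps)
  qed
  show ?thesis unfolding frob_def hadamard_def
    by (simp add: sum_distrib_left row)
qed

lemma pw_ineq: "0 \<le> (x::real) \<Longrightarrow> x \<le> 1 \<Longrightarrow> - max 0 (c - g) \<le> x * (g - c)"
proof (cases "c - g \<le> 0")
  case True
  assume "0 \<le> x" "x \<le> 1"
  then show ?thesis using True by (simp add: max_def)
next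
  case False
  assume x: "0 \<le> x" "x \<le> 1"
  have "1 * (g - c) \<le> x * (g - c)" using False x by (intro mult_right_mono_neg) auto
  then show ?thesis using False by (simp add: max_def)
qed

theorem mainTheorem15:
  fixes n :: nat and ell :: "nat \<Rightarrow> real" and lam K \<kappa> :: real
  assumes hl: "\<forall>i<n. ell i \<in> {-1, 1}"
    and hlam: "lam \<ge> 10^2" and hK: "K \<ge> 10^2"
  shows "let L = (\<lambda>i j. ell i * ell j);
             \<theta> = exp (- (lam^2) / 2 + 2 * K * lam + 3 * \<kappa>);
             M = gauss_matrix_space n
         in \<exists>S \<in> sets M. measure M S \<ge> 1 - exp (- 10 * \<kappa>) \<and>
              (\<forall>E \<in> S. \<forall>x :: nat \<Rightarrow> real.
                 (\<forall>i<n. 0 \<le> x i \<and> x i \<le> 1) \<and> (\<Sum>i<n. x i) \<le> 0.1 * real n \<longrightarrow>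
                 (let A = (\<lambda>i j. lam * L i j / sqrt (real n) + E (i, j));
                      X = (\<lambda>i j. x i)
                  in frob n (hadamard A L) X \<ge>
                       (K * (\<Sum>i<n. x i) - \<theta> * real n) * sqrt (real n)
                       - 10^4 * sqrt (real n) * max 0 (\<kappa> - lam)))"
proof -
  have ps: "prob_space (gauss_matrix_space n)" unfolding gauss_matrix_space_def
    by (rule prob_space_PiM) (use real_dist_normal_dist in \<open>simp add: real_distribution_def\<close>)
  interpret M: prob_space "gauss_matrix_space n" by (rule ps)
  define \<theta> where "\<theta> = exp (- (lam^2) / 2 + 2 * K * lam + 3 * \<kappa>)"
  define T where "T = \<theta> * real n + 10^4 * max 0 (\<kappa> - lam)"
  define H where "H = (\<lambda>E. \<Sum>i<n. max 0 ((K - lam) - gg n ell E i))"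
  show ?thesis
  proof (cases "\<kappa> \<le> 0")
    case True
    then have "1 - exp (- 10 * \<kappa>) \<le> 0" by simp
    then show ?thesis unfolding Let_def by (intro bexI[where x="{}"]) auto
  next
    case kpos: False
    show ?thesis
    proof (cases "n = 0")
      case True
      show ?thesis unfolding Let_def
        by (intro bexI[where x="space (gauss_matrix_space n)"]) (use M.prob_space[unfolded True] in \<open>auto simp: True frob_def\<close>)
    next
      case False
      then have n: "n > 0" by simp
      define S where "S = {E \<in> space (gauss_matrix_space n). H E \<le> T}"
      have Hm: "H \<in> borel_measurable (gauss_matrix_space n)" unfolding H_def by (rule H_meas)
      have Sset: "S \<in> sets (gauss_matrix_space n)" unfolding S_def using Hm by measurable
      have compl: "space (gauss_matrix_space n) - S = {E \<in> space (gauss_matrix_space n). T < H E}"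
        unfolding S_def by auto
      have "emeasure (gauss_matrix_space n) (space (gauss_matrix_space n) - S) \<le> ennreal (exp (-10*\<kappa>))"
        unfolding compl T_def H_def \<theta>_def using tail[OF n hl _ _ , of lam K \<kappa>] hlam hK kpos by simp
      then have "measure (gauss_matrix_space n) (space (gauss_matrix_space n) - S) \<le> exp (-10*\<kappa>)"
        by (simp add: M.emeasure_eq_measure)
      then have meas: "measure (gauss_matrix_space n) S \<ge> 1 - exp (-10*\<kappa>)"
        using M.prob_compl[OF Sset] by simp
      show ?thesis unfolding Let_def \<theta>_def[symmetric]
      proof (intro bexI[where x=S] conjI ballI allI impI)
        show "S \<in> sets (gauss_matrix_space n)" by (rule Sset)
        show "1 - exp (- 10 * \<kappa>) \<le> measure (gauss_matrix_space n) S" using meas by simp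
        fix E x assume E: "E \<in> S" and hx: "(\<forall>i<n. 0 \<le> x i \<and> x i \<le> 1) \<and> (\<Sum>i<n. x i) \<le> 0.1 * real n"
        have HT: "H E \<le> T" using E unfolding S_def by simp
        have "(\<Sum>i<n. x i * (lam + gg n ell E i)) - K * (\<Sum>i<n. x i) = (\<Sum>i<n. x i * (gg n ell E i - (K - lam)))"
          by (simp add: sum_distrib_left sum_subtractf algebra_simps sum.distrib)
        also have "\<dots> \<ge> (\<Sum>i<n. - max 0 ((K - lam) - gg n ell E i))"
          using hx by (intro sum_mono pw_ineq) auto
        finally have "(\<Sum>i<n. x i * (lam + gg n ell E i)) - K * (\<Sum>i<n. x i) \<ge> - H E"
          unfolding H_def by (simp add: sum_negf)
        then have key: "K * (\<Sum>i<n. x i) - \<theta> * real n - 10^4 * max 0 (\<kappa> - lam) \<le> (\<Sum>i<n. x i * (lam + gg n ell E i))"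
          using HT unfolding T_def by linarith
        have "sqrt (real n) * (K * (\<Sum>i<n. x i) - \<theta> * real n - 10^4 * max 0 (\<kappa> - lam)) \<le> sqrt (real n) * (\<Sum>i<n. x i * (lam + gg n ell E i))"
          using key by (intro mult_left_mono) auto
        then show "(K * (\<Sum>i<n. x i) - \<theta> * real n) * sqrt (real n) - 10^4 * sqrt (real n) * max 0 (\<kappa> - lam)
            \<le> frob n (hadamard (\<lambda>i j. lam * (ell i * ell j) / sqrt (real n) + E (i, j)) (\<lambda>i j. ell i * ell j)) (\<lambda>i j. x i)"
          unfolding frob_eq[OF n hl] by (simp add: algebra_simps)
      qed
    qed
  qed
qed

end
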